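(* Let $d\ge 2$ and $0<a<b\leq d$ be integers and $n\geq 1$. Then $$\ell_d^{(a,b)}(n)=\sum_{k=0}^{\lfloor (n-a)/d\rfloor}\binom{2k+n-a-dk}{n-a-dk}+\sum_{k=0}^{\lfloor (n-b)/d\rfloor}\binom{2k+1+n-b-dk}{n-b-dk},$$ where a sum with negative upper limit is empty.
   Context: A partition is a finite nonincreasing sequence of positive integers (its parts); its size is not fixed. The perimeter of a partition with largest part $\alpha$ and $\lambda$ parts is $\alpha+\lambda-1$. For $0<a<b\le d$, $\ell_d^{(a,b)}(n)$ is the number of partitions of perimeter $n$ all of whose parts are congruent to $a$ or $b$ modulo $d$. *)

theory Defs
  imports Main
begin

text \<open>A partition: a nonempty finite nonincreasing list of positive integers (its parts).
  Nonemptiness is needed for the largest part (and hence the perimeter) to exist.\<close>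
definition is_partition :: "nat list \<Rightarrow> bool" where
  "is_partition p \<longleftrightarrow> p \<noteq> [] \<and> sorted_wrt (\<ge>) p \<and> (\<forall>x\<in>set p. 0 < x)"

definition perimeter :: "nat list \<Rightarrow> nat" where
  "perimeter p = Max (set p) + length p - 1"

definition ell :: "nat \<Rightarrow> nat \<Rightarrow> nat \<Rightarrow> nat \<Rightarrow> nat" where
  "ell d a b n = card {p. is_partition p \<and> perimeter p = n \<and>
      (\<forall>x\<in>set p. x mod d = a mod d \<or> x mod d = b mod d)}"

end

theory Submission
  imports Defs "HOL-Library.Multiset"
begin

lemma card_Z:
  "card {zs::nat list. length zs = m \<and> sorted_wrt (\<ge>) zs \<and> (\<forall>z\<in>set zs. z \<le> t)} = (m + t) choose m"
proof -
  let ?Z = "{zs::nat list. length zs = m \<and> sorted_wrt (\<ge>) zs \<and> (\<forall>z\<in>set zs. z \<le> t)}"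
  have "bij_betw mset ?Z (multisets_of_size {0..t} m)"
  proof (rule bij_betw_imageI)
    show "inj_on mset ?Z"
    proof
      fix xs ys assume xs: "xs \<in> ?Z" and ys: "ys \<in> ?Z" and e: "mset xs = mset ys"
      have "sorted (rev xs)" "sorted (rev ys)" using xs ys by (auto simp: sorted_wrt_rev)
      moreover have "mset (rev xs) = mset (rev ys)" using e by simp
      ultimately have "rev xs = rev ys" using properties_for_sort by metis
      then show "xs = ys" by simp
    qed
    show "mset ` ?Z = multisets_of_size {0..t} m"
    proof
      show "mset ` ?Z \<subseteq> multisets_of_size {0..t} m"
        by (auto simp: multisets_of_size_def)
      show "multisets_of_size {0..t} m \<subseteq> mset ` ?Z"
      proof
        fix M assume M: "M \<in> multisets_of_size {0..t} m"
        let ?l = "rev (sorted_list_of_multiset M)"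
        have "sorted_wrt (\<ge>) ?l"
          by (simp add: sorted_wrt_rev)
        moreover have "length ?l = m" using M by (simp add: multisets_of_size_def flip: size_mset)
        moreover have "\<forall>z\<in>set ?l. z \<le> t" using M by (auto simp: multisets_of_size_def)
        ultimately have l: "?l \<in> ?Z" by blast
        have "M = mset ?l" by simp
        then show "M \<in> mset ` ?Z" by (rule rev_image_eqI[OF l])
      qed
    qed
  qed
  then have "card ?Z = card (multisets_of_size {0..t} m)" by (rule bij_betw_same_card)
  also have "\<dots> = (m + t) choose m" by (simp add: card_multisets_of_size add.commute)
  finally show ?thesis .
qed

definition vl :: "nat \<Rightarrow> nat \<Rightarrow> nat \<Rightarrow> nat \<Rightarrow> nat" where
  "vl d a b t = (if even t then a else b) + d * (t div 2)"

lemma vl_mono: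
  assumes "0 < a" "a < b" "b \<le> d"
  shows "strict_mono (vl d a b)"
proof (rule strict_mono_Suc_iff[THEN iffD2], intro allI)
  fix t
  show "vl d a b t < vl d a b (Suc t)"
  proof (cases "even t")
    case True then show ?thesis using assms by (simp add: vl_def)
  next
    case False
    then obtain k where "t = 2*k+1" by (metis oddE)
    then show ?thesis using assms by (simp add: vl_def)
  qed
qed

lemma vl_ge: assumes "0 < a" "a < b" "b \<le> d" shows "t \<le> vl d a b t"
  using strict_mono_imp_increasing[OF vl_mono[OF assms]] by blast

lemma vl_pos: assumes "0 < a" "a < b" shows "0 < vl d a b t"
  using assms by (simp add: vl_def)

lemma vl_allowed: assumes "0 < a" "a < b" "b \<le> d"
  shows "vl d a b t mod d = a mod d \<or> vl d a b t mod d = b mod d"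
  by (simp add: vl_def)

lemma allowed_vl: assumes "0 < a" "a < b" "b \<le> d" "0 < x"
  and "x mod d = a mod d \<or> x mod d = b mod d"
  shows "\<exists>t. x = vl d a b t"
proof -
  have ad: "a mod d = a" using assms by simp
  from assms(5) show ?thesis
  proof
    assume h: "x mod d = a mod d"
    have "x = a + d * (x div d)" using h ad by (metis add.commute div_mult_mod_eq mult.commute)
    then have "x = vl d a b (2 * (x div d))" by (simp add: vl_def)
    then show ?thesis by blast
  next
    assume h: "x mod d = b mod d"
    show ?thesis
    proof (cases "b = d")
      case True
      then have "x mod d = 0" using h by simp
      then have "d dvd x" by auto
      then obtain q where q: "x = d * q" by auto
      with assms have "q \<ge> 1" by (cases q) auto
      then have "x = b + d * (q - 1)" using q True by (cases q) auto
      then have "x = vl d a b (2 * (q - 1) + 1)" by (simp add: vl_def)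
      then show ?thesis by blast
    next
      case False
      then have bd: "b mod d = b" using assms by simp
      have "x = b + d * (x div d)" using h bd by (metis add.commute div_mult_mod_eq mult.commute)
      then have "x = vl d a b (2 * (x div d) + 1)" by (simp add: vl_def)
      then show ?thesis by blast
    qed
  qed
qed

lemma Max_sorted_hd: "xs \<noteq> [] \<Longrightarrow> sorted_wrt (\<ge>) (xs::nat list) \<Longrightarrow> Max (set xs) = hd xs"
proof (cases xs)
  case (Cons x ys)
  assume "sorted_wrt (\<ge>) xs"
  then have "\<forall>y\<in>set xs. y \<le> x" using Cons by auto
  then show ?thesis using Cons by (intro Max_eqI) auto
qed simp


lemma ell_sum:
  assumes "0 < a" "a < b" "b \<le> d"
  shows "ell d a b n = (\<Sum>t\<in>{t. vl d a b t \<le> n}. ((n - vl d a b t) + t) choose (n - vl d a b t))"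
proof -
  let ?v = "vl d a b"
  let ?S = "{p. is_partition p \<and> perimeter p = n \<and>
      (\<forall>x\<in>set p. x mod d = a mod d \<or> x mod d = b mod d)}"
  let ?T = "{ys. ys \<noteq> [] \<and> sorted_wrt (\<ge>) ys \<and> ?v (hd ys) + length ys - 1 = n}"
  define Z where "Z t = {zs::nat list. length zs = n - ?v t \<and> sorted_wrt (\<ge>) zs \<and> (\<forall>z\<in>set zs. z \<le> t)}" for t
  have sm: "strict_mono ?v" using vl_mono[OF assms] .
  have inj: "inj ?v" using sm strict_mono_imp_inj_on by blast
  have srt: "sorted_wrt (\<ge>) (map ?v ys) \<longleftrightarrow> sorted_wrt (\<ge>) ys" for ys
    by (simp add: sorted_wrt_map strict_mono_less_eq[OF sm])
  have mem: "map ?v ys \<in> ?S \<longleftrightarrow> ys \<in> ?T" for ys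
  proof (cases ys)
    case Nil then show ?thesis by (simp add: is_partition_def)
  next
    case (Cons y ys')
    have ne: "ys \<noteq> []" using Cons by simp
    have A: "\<forall>x\<in>set (map ?v ys). x mod d = a mod d \<or> x mod d = b mod d"
      using vl_allowed[OF assms] by auto
    have B: "is_partition (map ?v ys) \<longleftrightarrow> sorted_wrt (\<ge>) ys"
    proof -
      have "map ?v ys \<noteq> []" using ne by simp
      moreover have "\<forall>x\<in>set (map ?v ys). 0 < x" using vl_pos[OF assms(1,2)] by auto
      ultimately show ?thesis unfolding is_partition_def using srt[of ys] by blast
    qed
    have C: "perimeter (map ?v ys) = ?v (hd ys) + length ys - 1" if "sorted_wrt (\<ge>) ys"
    proof -
      have s: "sorted_wrt (\<ge>) (map ?v ys)" using srt that by blast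
      have "Max (set (map ?v ys)) = hd (map ?v ys)"
        by (rule Max_sorted_hd[OF _ s]) (simp add: ne)
      then show ?thesis unfolding perimeter_def using ne by (simp add: hd_map)
    qed
    show ?thesis unfolding mem_Collect_eq using A B C ne by (metis is_partition_def)
  qed
  have S_eq: "?S = map ?v ` ?T"
  proof
    show "map ?v ` ?T \<subseteq> ?S" using mem by blast
    show "?S \<subseteq> map ?v ` ?T"
    proof
      fix p assume p: "p \<in> ?S"
      have "\<forall>x\<in>set p. \<exists>t. x = ?v t" using p allowed_vl[OF assms] by (auto simp: is_partition_def)
      then have "\<forall>x\<in>set p. x = ?v (inv ?v x)" by (metis inj inv_f_f)
      then have pe: "p = map ?v (map (inv ?v) p)" by (simp add: map_idI)
      have h: "map ?v (map (inv ?v) p) \<in> ?S" by (subst pe[symmetric]) (rule p)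
      have "map (inv ?v) p \<in> ?T" using h mem[of "map (inv ?v) p"] by blast
      then show "p \<in> map ?v ` ?T" using pe by blast
    qed
  qed
  have "card ?S = card ?T"
    unfolding S_eq by (rule card_image) (meson inj inj_mapI inj_on_subset subset_UNIV)
  also have "?T = (\<lambda>(t,zs). t # zs) ` (SIGMA t:{t. ?v t \<le> n}. Z t)"
  proof
    show "?T \<subseteq> (\<lambda>(t,zs). t # zs) ` (SIGMA t:{t. ?v t \<le> n}. Z t)"
    proof
      fix ys assume ys: "ys \<in> ?T"
      then obtain t zs where tz: "ys = t # zs" by (cases ys) auto
      then have "(t, zs) \<in> (SIGMA t:{t. ?v t \<le> n}. Z t)" using ys by (auto simp: Z_def)
      then show "ys \<in> (\<lambda>(t,zs). t # zs) ` (SIGMA t:{t. ?v t \<le> n}. Z t)" using tz by force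
    qed
    show "(\<lambda>(t,zs). t # zs) ` (SIGMA t:{t. ?v t \<le> n}. Z t) \<subseteq> ?T"
      by (auto simp: Z_def)
  qed
  also have "card \<dots> = card (SIGMA t:{t. ?v t \<le> n}. Z t)"
    by (rule card_image) (auto simp: inj_on_def)
  also have "\<dots> = (\<Sum>t\<in>{t. ?v t \<le> n}. card (Z t))"
  proof (rule card_SigmaI)
    show "finite {t. ?v t \<le> n}"
      by (rule finite_subset[of _ "{..n}"]) (auto intro: order.trans[OF vl_ge[OF assms]])
    show "\<forall>t\<in>{t. ?v t \<le> n}. finite (Z t)"
    proof
      fix t
      have "Z t \<subseteq> {zs. set zs \<subseteq> {..t} \<and> length zs = n - ?v t}" by (auto simp: Z_def)
      then show "finite (Z t)" by (rule finite_subset) (simp add: finite_lists_length_eq)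
    qed
  qed
  also have "\<dots> = (\<Sum>t\<in>{t. ?v t \<le> n}. ((n - ?v t) + t) choose (n - ?v t))"
    unfolding Z_def by (simp add: card_Z)
  finally show ?thesis unfolding ell_def .
qed


lemma int_le_div_iff: assumes "(0::int) < d" shows "k \<le> x div d \<longleftrightarrow> k * d \<le> x"
proof
  assume "k \<le> x div d"
  then have "k * d \<le> (x div d) * d" using assms by (simp add: mult_right_mono)
  also have "\<dots> \<le> x" proof -
    have "x = x div d * d + x mod d" by simp
    moreover have "0 \<le> x mod d" using assms by simp
    ultimately show ?thesis by linarith
  qed
  finally show "k * d \<le> x" .
next
  assume "k * d \<le> x"
  then have "(k*d) div d \<le> x div d" using zdiv_mono1[OF _ assms] by blast
  then show "k \<le> x div d" using assms by simp
qed

lemma int_sum_conv: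
  fixes c d n :: nat and h :: "int \<Rightarrow> int"
  assumes "0 < d"
  shows "(\<Sum>k::int = 0..(int n - int c) div int d. h k) = (\<Sum>k\<in>{k::nat. c + d*k \<le> n}. h (int k))"
proof -
  have "{0..(int n - int c) div int d} = int ` {k::nat. c + d*k \<le> n}"
  proof (rule set_eqI)
    fix k :: int
    have "k \<le> (int n - int c) div int d \<longleftrightarrow> k * int d \<le> int n - int c"
      using assms by (simp add: int_le_div_iff)
    show "k \<in> {0..(int n - int c) div int d} \<longleftrightarrow> k \<in> int ` {k::nat. c + d*k \<le> n}"
    proof
      assume "k \<in> {0..(int n - int c) div int d}"
      then have "0 \<le> k" "k * int d \<le> int n - int c" using \<open>k \<le> _ \<longleftrightarrow> _\<close> by auto
      then have k0: "k = int (nat k)" by simp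
      have e: "int (c + d * nat k) = int c + k * int d" using \<open>0 \<le> k\<close> by (simp add: mult.commute)
      have kd: "int (c + d * nat k) \<le> int n" unfolding e using \<open>k * int d \<le> _\<close> by linarith
      from kd have "c + d * nat k \<le> n" by (simp only: of_nat_le_iff)
      then show "k \<in> int ` {k::nat. c + d*k \<le> n}" using k0 by blast
    next
      assume "k \<in> int ` {k::nat. c + d*k \<le> n}"
      then obtain j where "k = int j" "c + d*j \<le> n" by auto
      then show "k \<in> {0..(int n - int c) div int d}" using \<open>k \<le> _ \<longleftrightarrow> _\<close>
      proof -
        have "int (c + d*j) \<le> int n" using \<open>c + d*j \<le> n\<close> by (simp only: of_nat_le_iff)
        moreover have "int (c + d*j) = int c + k * int d" using \<open>k = int j\<close> by (simp add: mult.commute)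
        ultimately have "k * int d \<le> int n - int c" by linarith
        then show ?thesis using \<open>k \<le> _ \<longleftrightarrow> _\<close> \<open>k = int j\<close> by simp
      qed
    qed
  qed
  then show ?thesis by (simp add: sum.reindex)
qed

lemma split_sum:
  assumes "0 < a" "a < b" "b \<le> d"
  shows "(\<Sum>t\<in>{t. vl d a b t \<le> n}. g t) =
    (\<Sum>k\<in>{k. a + d*k \<le> n}. g (2*k)) + (\<Sum>k\<in>{k. b + d*k \<le> n}. g (2*k+1))"
proof -
  have fin: "finite {k::nat. c + d*k \<le> n}" for c
  proof (rule finite_subset[of _ "{..n}"])
    have d1: "1 \<le> d" using assms by simp
    show "{k::nat. c + d*k \<le> n} \<subseteq> {..n}"
    proof
      fix x assume "x \<in> {k::nat. c + d*k \<le> n}"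
      then have "c + d*x \<le> n" by simp
      moreover have "x \<le> d*x" using d1 by simp
      ultimately show "x \<in> {..n}" unfolding atMost_iff by linarith
    qed
  qed simp
  have eq: "{t. vl d a b t \<le> n} = (\<lambda>k. 2*k) ` {k. a + d*k \<le> n} \<union> (\<lambda>k. 2*k+1) ` {k. b + d*k \<le> n}"
  proof (rule set_eqI)
    fix t
    show "t \<in> {t. vl d a b t \<le> n} \<longleftrightarrow> t \<in> (\<lambda>k. 2*k) ` {k. a + d*k \<le> n} \<union> (\<lambda>k. 2*k+1) ` {k. b + d*k \<le> n}"
    proof (cases "even t")
      case True then obtain k where "t = 2*k" by blast
      then show ?thesis by (auto simp: vl_def; presburger)
    next
      case False then obtain k where "t = 2*k+1" by (metis oddE)
      then show ?thesis by (auto simp: vl_def; presburger)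
    qed
  qed
  have "(\<Sum>t\<in>{t. vl d a b t \<le> n}. g t) = (\<Sum>t\<in>(\<lambda>k. 2*k) ` {k. a + d*k \<le> n}. g t) + (\<Sum>t\<in>(\<lambda>k. 2*k+1) ` {k. b + d*k \<le> n}. g t)"
    unfolding eq by (rule sum.union_disjoint) (use fin in auto, presburger)
  also have "\<dots> = (\<Sum>k\<in>{k. a + d*k \<le> n}. g (2*k)) + (\<Sum>k\<in>{k. b + d*k \<le> n}. g (2*k+1))"
    by (simp add: sum.reindex inj_on_def)
  finally show ?thesis .
qed

theorem mainTheorem9:
  fixes d a b n :: nat
  assumes "d \<ge> 2" and "0 < a" and "a < b" and "b \<le> d" and "n \<ge> 1"
  shows "int (ell d a b n) =
    (\<Sum>k::int = 0..(int n - int a) div int d.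
        int (nat (2*k + int n - int a - int d * k) choose nat (int n - int a - int d * k)))
  + (\<Sum>k::int = 0..(int n - int b) div int d.
        int (nat (2*k + 1 + int n - int b - int d * k) choose nat (int n - int b - int d * k)))"
proof -
  have d0: "0 < d" using assms by simp
  have "ell d a b n = (\<Sum>k\<in>{k. a + d*k \<le> n}. (n - (a + d*k) + 2*k) choose (n - (a + d*k)))
     + (\<Sum>k\<in>{k. b + d*k \<le> n}. (n - (b + d*k) + (2*k+1)) choose (n - (b + d*k)))"
    unfolding ell_sum[OF assms(2,3,4)] split_sum[OF assms(2,3,4)] by (simp add: vl_def)
  then have "int (ell d a b n) = (\<Sum>k\<in>{k. a + d*k \<le> n}. int ((n - (a + d*k) + 2*k) choose (n - (a + d*k))))
     + (\<Sum>k\<in>{k. b + d*k \<le> n}. int ((n - (b + d*k) + (2*k+1)) choose (n - (b + d*k))))"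
    by simp
  also have "\<dots> = (\<Sum>k\<in>{k. a + d*k \<le> n}.
        int (nat (2*int k + int n - int a - int d * int k) choose nat (int n - int a - int d * int k)))
     + (\<Sum>k\<in>{k. b + d*k \<le> n}.
        int (nat (2*int k + 1 + int n - int b - int d * int k) choose nat (int n - int b - int d * int k)))"
  proof (intro arg_cong2[where f="(+)"] sum.cong refl)
    fix k assume "k \<in> {k. a + d*k \<le> n}"
    then have h: "a + d*k \<le> n" by simp
    then have e1: "2*int k + int n - int a - int d * int k = int (n - (a + d*k) + 2*k)"
         and e2: "int n - int a - int d * int k = int (n - (a + d*k))" by (simp_all add: of_nat_diff)
    then have "nat (2*int k + int n - int a - int d * int k) = n - (a + d*k) + 2*k"
         "nat (int n - int a - int d * int k) = n - (a + d*k)" by (simp_all only: e1 e2 nat_int)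
    then show "int ((n - (a + d*k) + 2*k) choose (n - (a + d*k))) =
        int (nat (2*int k + int n - int a - int d * int k) choose nat (int n - int a - int d * int k))"
      by simp
  next
    fix k assume "k \<in> {k. b + d*k \<le> n}"
    then have h: "b + d*k \<le> n" by simp
    then have e1: "2*int k + 1 + int n - int b - int d * int k = int (n - (b + d*k) + (2*k+1))"
         and e2: "int n - int b - int d * int k = int (n - (b + d*k))" by (simp_all add: of_nat_diff)
    then have "nat (2*int k + 1 + int n - int b - int d * int k) = n - (b + d*k) + (2*k+1)"
         "nat (int n - int b - int d * int k) = n - (b + d*k)" by (simp_all only: e1 e2 nat_int)
    then show "int ((n - (b + d*k) + (2*k+1)) choose (n - (b + d*k))) =
        int (nat (2*int k + 1 + int n - int b - int d * int k) choose nat (int n - int b - int d * int k))"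
      by simp
  qed
  also have "\<dots> = (\<Sum>k::int = 0..(int n - int a) div int d.
        int (nat (2*k + int n - int a - int d * k) choose nat (int n - int a - int d * k)))
  + (\<Sum>k::int = 0..(int n - int b) div int d.
        int (nat (2*k + 1 + int n - int b - int d * k) choose nat (int n - int b - int d * k)))"
    by (simp only: int_sum_conv[OF d0])
  finally show ?thesis .
qed

end
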